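(* Let $1<p<\infty$ and $d\ge 2$. Suppose $\Omega\subset\mathbb{R}^d$ is a bounded open set with $C^{2,\beta}$ boundary for some $0<\beta<1$, with outer unit normal $\nu$. Let the conductivity $\gamma$ be bounded from below by a positive constant, bounded, continuously differentiable on $\overline{\Omega}$, with $\nabla\gamma$ Hölder-continuous. Let the boundary values satisfy $v\in C^{2,\beta}(\partial\Omega)$, and let $u$ be the weak solution of $$\operatorname{div}\left(\gamma(x)|\nabla u|^{p-2}\nabla u\right)=0 \text{ in } \Omega,\qquad u=v \text{ on } \partial\Omega$$ (so $u\in C^1(\overline{\Omega})$). Then for every $x_0\in\partial\Omega$ the pointwise value of the strong Dirichlet-to-Neumann map $$\Lambda_\gamma^s(v)(x_0)=\gamma(x_0)\,|\nabla u(x_0)|^{p-2}\,\partial_\nu u(x_0)$$ can be recovered from the weak Dirichlet-to-Neumann map $$\Lambda_\gamma^w\colon W^{1,p}(\Omega)/W^{1,p}_0(\Omega)\to\left(W^{1,p}(\Omega)/W^{1,p}_0(\Omega)\right)',\qquad \langle\Lambda_\gamma^w(v),g\rangle=\int_\Omega \gamma|\nabla u|^{p-2}\nabla u\cdot\nabla\tilde g\,dx,$$ where $\tilde g\in W^{1,p}(\Omega)$ is any function with trace $g$ on $\partial\Omega$.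
   Context: Here $\partial_\nu u=\nu\cdot\nabla u$ denotes the derivative in the direction of the outer unit normal $\nu$ of $\partial\Omega$. *)

theory Defs
  imports "HOL-Analysis.Analysis"
begin

definition holder_on :: "'a::metric_space set \<Rightarrow> real \<Rightarrow> ('a \<Rightarrow> 'b::real_normed_vector) \<Rightarrow> bool" where
  "holder_on S a f \<longleftrightarrow> (\<exists>C. \<forall>x\<in>S. \<forall>y\<in>S. norm (f x - f y) \<le> C * dist x y powr a)"

definition C2_holder :: "'a::euclidean_space set \<Rightarrow> real \<Rightarrow> ('a \<Rightarrow> real) \<Rightarrow> ('a \<Rightarrow> 'a) \<Rightarrow> ('a \<Rightarrow> 'a \<Rightarrow> 'a) \<Rightarrow> bool" where
  "C2_holder S b V DV H \<longleftrightarrow>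
     (\<forall>x\<in>S. (V has_derivative (\<lambda>h. DV x \<bullet> h)) (at x) \<and> (DV has_derivative H x) (at x)) \<and>
     (\<exists>C. \<forall>x\<in>S. \<forall>y\<in>S. onorm (\<lambda>h. H x h - H y h) \<le> C * dist x y powr b)"

definition C2beta_boundary :: "'a::euclidean_space set \<Rightarrow> real \<Rightarrow> bool" where
  "C2beta_boundary \<Omega> b \<longleftrightarrow>
     (\<forall>x0\<in>frontier \<Omega>. \<exists>r>0. \<exists>\<rho> D\<rho> H.
        C2_holder (ball x0 r) b \<rho> D\<rho> H \<and> (\<forall>x\<in>ball x0 r. D\<rho> x \<noteq> 0) \<and>
        \<Omega> \<inter> ball x0 r = {x\<in>ball x0 r. \<rho> x < 0})"

definition outer_unit_normal :: "'a::euclidean_space set \<Rightarrow> 'a \<Rightarrow> 'a \<Rightarrow> bool" where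
  "outer_unit_normal \<Omega> x0 n \<longleftrightarrow> x0 \<in> frontier \<Omega> \<and>
     (\<exists>r>0. \<exists>\<rho> D\<rho>. (\<forall>x\<in>ball x0 r. (\<rho> has_derivative (\<lambda>h. D\<rho> x \<bullet> h)) (at x)) \<and>
        continuous_on (ball x0 r) D\<rho> \<and> D\<rho> x0 \<noteq> 0 \<and>
        \<Omega> \<inter> ball x0 r = {x\<in>ball x0 r. \<rho> x < 0} \<and>
        n = D\<rho> x0 /\<^sub>R norm (D\<rho> x0))"

definition C1_closure :: "'a::euclidean_space set \<Rightarrow> ('a \<Rightarrow> real) \<Rightarrow> ('a \<Rightarrow> 'a) \<Rightarrow> bool" where
  "C1_closure \<Omega> f Df \<longleftrightarrow> continuous_on (closure \<Omega>) f \<and> continuous_on (closure \<Omega>) Df \<and>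
     (\<forall>x\<in>\<Omega>. (f has_derivative (\<lambda>h. Df x \<bullet> h)) (at x))"

definition test_fn :: "'a::euclidean_space set \<Rightarrow> ('a \<Rightarrow> real) \<Rightarrow> ('a \<Rightarrow> 'a) \<Rightarrow> bool" where
  "test_fn \<Omega> \<phi> D\<phi> \<longleftrightarrow> (\<forall>x. (\<phi> has_derivative (\<lambda>h. D\<phi> x \<bullet> h)) (at x)) \<and> continuous_on UNIV D\<phi> \<and>
     compact (closure {x. \<phi> x \<noteq> 0}) \<and> closure {x. \<phi> x \<noteq> 0} \<subseteq> \<Omega>"

definition admissible_conductivity :: "'a::euclidean_space set \<Rightarrow> ('a \<Rightarrow> real) \<Rightarrow> bool" where
  "admissible_conductivity \<Omega> \<gamma> \<longleftrightarrow>
     (\<exists>c>0. \<forall>x\<in>closure \<Omega>. c \<le> \<gamma> x) \<and> (\<exists>M. \<forall>x\<in>closure \<Omega>. \<gamma> x \<le> M) \<and>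
     (\<exists>D\<gamma> a. C1_closure \<Omega> \<gamma> D\<gamma> \<and> 0 < a \<and> a < 1 \<and> holder_on (closure \<Omega>) a D\<gamma>)"

text \<open>The p-Laplace flux density \<gamma>|\<nabla>u|^(p-2)\<nabla>u paired with a vector w
  (with the usual convention that the flux is 0 where \<nabla>u = 0).\<close>
definition flux :: "real \<Rightarrow> real \<Rightarrow> 'a::euclidean_space \<Rightarrow> 'a \<Rightarrow> real" where
  "flux p g G w = g * norm G powr (p - 2) * (G \<bullet> w)"

definition weak_solution :: "'a::euclidean_space set \<Rightarrow> real \<Rightarrow> ('a \<Rightarrow> real) \<Rightarrow> ('a \<Rightarrow> real) \<Rightarrow> ('a \<Rightarrow> real) \<Rightarrow> ('a \<Rightarrow> 'a) \<Rightarrow> bool" where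
  "weak_solution \<Omega> p \<gamma> v u G \<longleftrightarrow> C1_closure \<Omega> u G \<and> (\<forall>x\<in>frontier \<Omega>. u x = v x) \<and>
     (\<forall>\<phi> D\<phi>. test_fn \<Omega> \<phi> D\<phi> \<longrightarrow> integral \<Omega> (\<lambda>x. flux p (\<gamma> x) (G x) (D\<phi> x)) = 0)"

definition weak_DN :: "'a::euclidean_space set \<Rightarrow> real \<Rightarrow> ('a \<Rightarrow> real) \<Rightarrow> ('a \<Rightarrow> 'a) \<Rightarrow> ('a \<Rightarrow> 'a) \<Rightarrow> real" where
  "weak_DN \<Omega> p \<gamma> G Dg = integral \<Omega> (\<lambda>x. flux p (\<gamma> x) (G x) (Dg x))"

definition strong_DN :: "real \<Rightarrow> ('a \<Rightarrow> real) \<Rightarrow> ('a \<Rightarrow> 'a) \<Rightarrow> 'a \<Rightarrow> 'a::euclidean_space \<Rightarrow> real" where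
  "strong_DN p \<gamma> G n x0 = flux p (\<gamma> x0) (G x0) n"

end

theory Submission
  imports Defs
begin

lemma int_closure:
  fixes f :: "'a::euclidean_space \<Rightarrow> real"
  assumes "open \<Omega>" "bounded \<Omega>" "continuous_on (closure \<Omega>) f"
  shows "f integrable_on \<Omega>"
proof -
  have "compact (closure \<Omega>)" using assms(2) by (simp add: compact_closure)
  then have "bounded (f ` closure \<Omega>)" using assms(3) compact_continuous_image compact_imp_bounded by blast
  then obtain B where B: "\<And>x. x \<in> closure \<Omega> \<Longrightarrow> norm (f x) \<le> B"
    by (meson bounded_iff imageI)
  have lm: "\<Omega> \<in> lmeasurable" using assms by (simp add: bounded_set_imp_lmeasurable borel_open)
  show ?thesis
  proof (rule measurable_bounded_by_integrable_imp_integrable)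
    show "f \<in> borel_measurable (lebesgue_on \<Omega>)"
      using assms lm by (intro continuous_imp_measurable_on_sets_lebesgue)
        (auto intro: continuous_on_subset[OF _ closure_subset])
    show "(\<lambda>x. B) integrable_on \<Omega>" using lm by (rule integrable_on_const)
    show "\<And>x. x \<in> \<Omega> \<Longrightarrow> norm (f x) \<le> B" using B closure_subset by blast
    show "\<Omega> \<in> sets lebesgue" using lm by auto
  qed
qed

lemma kderiv: "((\<lambda>u::real. (max 0 u)^2) has_real_derivative (2 * max 0 u)) (at u)"
proof (cases "u = 0")
  case False
  show ?thesis
  proof (cases "u > 0")
    case True
    have "((\<lambda>u::real. u^2) has_real_derivative (2 * max 0 u)) (at u)"
      using True by (auto intro!: derivative_eq_intros)
    then show ?thesis
      by (rule has_field_derivative_transform_within_open[where S="{0<..}"]) (use True in auto)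
  next
    case f: False
    have "((\<lambda>u::real. 0) has_real_derivative (2 * max 0 u)) (at u)"
      using f False by (auto intro!: derivative_eq_intros)
    then show ?thesis
      by (rule has_field_derivative_transform_within_open[where S="{..<0}"]) (use f False in auto)
  qed
next
  case True
  have "((\<lambda>y::real. ((max 0 y)\<^sup>2 - (max 0 0)\<^sup>2) / (y - 0)) \<longlongrightarrow> 0) (at 0)"
  proof (rule Lim_null_comparison)
    show "\<forall>\<^sub>F y in at (0::real). norm (((max 0 y)\<^sup>2 - (max 0 0)\<^sup>2) / (y - 0)) \<le> \<bar>y\<bar>"
    proof (rule always_eventually, rule allI)
      fix y :: real
      show "norm (((max 0 y)\<^sup>2 - (max 0 0)\<^sup>2) / (y - 0)) \<le> \<bar>y\<bar>"
      proof (cases "y > 0")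
        case True
        then have "max 0 y = y" by simp
        then have "((max 0 y)\<^sup>2 - (max 0 0)\<^sup>2) / (y - 0) = y"
          using True by (simp add: power2_eq_square)
        then show ?thesis by simp
      next
        case False
        then have "max 0 y = 0" by simp
        then show ?thesis by simp
      qed
    qed
    show "((\<lambda>y::real. \<bar>y\<bar>) \<longlongrightarrow> 0) (at 0)"
      using tendsto_rabs[OF tendsto_ident_at[where a="0::real" and s=UNIV]] by simp
  qed
  then show ?thesis unfolding True has_field_derivative_iff by simp
qed

lemma Ncont:
  fixes z :: "'a::euclidean_space"
  assumes "1 < p"
  shows "continuous (at z) (\<lambda>z. norm z powr (p - 2) *\<^sub>R z)"
proof (cases "z = 0")
  case False
  then show ?thesis by (intro continuous_intros) auto
next
  case True
  have "((\<lambda>y::'a. norm y powr (p - 2) *\<^sub>R y) \<longlongrightarrow> 0) (at 0)"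
  proof (rule Lim_null_comparison)
    show "\<forall>\<^sub>F y in at (0::'a). norm (norm y powr (p - 2) *\<^sub>R y) \<le> norm y powr (p - 1)"
    proof (rule always_eventually, rule allI)
      fix y :: 'a
      show "norm (norm y powr (p - 2) *\<^sub>R y) \<le> norm y powr (p - 1)"
      proof (cases "y = 0")
        case True then show ?thesis by simp
      next
        case False
        then have "norm (norm y powr (p - 2) *\<^sub>R y) = norm y powr (p - 2) * norm y powr 1" by simp
        also have "\<dots> = norm y powr (p - 1)" 
        proof -
          have e: "p - 1 = (p - 2) + 1" by simp
          show ?thesis unfolding e powr_add by simp
        qed
        finally show ?thesis by simp
      qed
    qed
    have "((\<lambda>y::'a. norm y powr (p - 1)) \<longlongrightarrow> norm (0::'a) powr (p - 1)) (at 0)"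
      using assms by (intro tendsto_intros) auto
    then show "((\<lambda>y::'a. norm y powr (p - 1)) \<longlongrightarrow> 0) (at 0)" using assms by simp
  qed
  then show ?thesis unfolding True continuous_at by simp
qed

lemma Ncont_on:
  fixes G :: "'b::topological_space \<Rightarrow> 'a::euclidean_space"
  assumes "1 < p" "continuous_on S G"
  shows "continuous_on S (\<lambda>x. norm (G x) powr (p - 2) *\<^sub>R G x)"
  using continuous_on_compose2[OF continuous_at_imp_continuous_on[OF ballI[OF Ncont[OF assms(1)]]] assms(2)]
  by auto
lemma core:
  fixes \<Omega> :: "'a::euclidean_space set" and W :: "'a \<Rightarrow> 'a"
  assumes opn: "open \<Omega>" and bdd: "bounded \<Omega>" and Wc: "continuous_on (closure \<Omega>) W"
    and H: "\<forall>g Dg. C1_closure \<Omega> g Dg \<longrightarrow> integral \<Omega> (\<lambda>x. W x \<bullet> Dg x) = 0"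
    and N: "outer_unit_normal \<Omega> x0 n"
  shows "W x0 \<bullet> n \<le> 0"
proof (rule ccontr)
  assume neg: "\<not> W x0 \<bullet> n \<le> 0"
  from N obtain r \<rho> D\<rho> where x0f: "x0 \<in> frontier \<Omega>" and r: "r > 0"
    and der: "\<forall>x\<in>ball x0 r. (\<rho> has_derivative (\<lambda>h. D\<rho> x \<bullet> h)) (at x)"
    and contD: "continuous_on (ball x0 r) D\<rho>" and nz: "D\<rho> x0 \<noteq> 0"
    and eqO: "\<Omega> \<inter> ball x0 r = {x\<in>ball x0 r. \<rho> x < 0}"
    and nd: "n = D\<rho> x0 /\<^sub>R norm (D\<rho> x0)"
    unfolding outer_unit_normal_def by blast
  define c where "c = W x0 \<bullet> D\<rho> x0"
  have "W x0 \<bullet> n = c / norm (D\<rho> x0)" unfolding nd c_def by (simp add: divide_simps)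
  with neg nz have c: "c > 0" by (simp add: divide_simps split: if_splits)
  have x0c: "x0 \<in> closure \<Omega>" and x0n: "x0 \<notin> \<Omega>"
    using x0f opn by (auto simp: frontier_def interior_open)
  have rhoc: "continuous_on (ball x0 r) \<rho>"
    using der by (meson has_derivative_continuous continuous_at_imp_continuous_on)
  define S0 where "S0 = closure \<Omega> \<inter> ball x0 r"
  have x0S: "x0 \<in> S0" using x0c r by (simp add: S0_def)
  have f1c: "continuous_on S0 (\<lambda>x. W x \<bullet> D\<rho> x)"
    unfolding S0_def
    by (intro continuous_intros; rule continuous_on_subset[OF Wc] continuous_on_subset[OF contD]; auto)
  have Wc0: "continuous_on S0 W" unfolding S0_def by (rule continuous_on_subset[OF Wc]) auto
  obtain s1 where s1: "s1 > 0" and s1P: "\<forall>x\<in>S0. dist x x0 < s1 \<longrightarrow> dist (W x \<bullet> D\<rho> x) c < c/2"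
    using f1c x0S c unfolding continuous_on_iff c_def by (meson half_gt_zero)
  obtain s2 where s2: "s2 > 0" and s2P: "\<forall>x\<in>S0. dist x x0 < s2 \<longrightarrow> dist (W x) (W x0) < 1"
    using Wc0 x0S unfolding continuous_on_iff by (meson zero_less_one)
  define M where "M = norm (W x0) + 1"
  have M: "M > 0" unfolding M_def by (simp add: add_nonneg_pos)
  have WM: "norm (W x) \<le> M" if "x \<in> S0" "dist x x0 < s2" for x
    using s2P that norm_triangle_sub[of "W x" "W x0"] unfolding M_def dist_norm by force
  define t where "t = min (r/2) (min s1 (min s2 (c/(8*M))))"
  have t: "t > 0" using r s1 s2 c M by (simp add: t_def)
  have tr: "t \<le> r/2" "t \<le> s1" "t \<le> s2" "t \<le> c/(8*M)" by (simp_all add: t_def)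
  define \<delta> where "\<delta> = t^2"
  define \<tau> where "\<tau> = (\<lambda>x. \<rho> x - (x - x0) \<bullet> (x - x0) + \<delta>)"
  define D\<tau> where "D\<tau> = (\<lambda>x. D\<rho> x - 2 *\<^sub>R (x - x0))"
  define k where "k = (\<lambda>u::real. (max 0 u)^2)"
  define k' where "k' = (\<lambda>u::real. 2 * max 0 u)"
  define g where "g = (\<lambda>x. if x \<in> ball x0 r then k (\<tau> x) else 0)"
  define Dg where "Dg = (\<lambda>x. if x \<in> ball x0 r then k' (\<tau> x) *\<^sub>R D\<tau> x else 0)"
  have kz: "k u = 0" "k' u = 0" if "u \<le> 0" for u using that by (simp_all add: k_def k'_def)
  have k'nn: "k' u \<ge> 0" for u by (simp add: k'_def)
  have k'pos: "k' u > 0" if "u > 0" for u using that by (simp add: k'_def)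
  have rho_le: "\<rho> x \<le> 0" if "x \<in> S0" for x
  proof -
    from that have xb: "x \<in> ball x0 r" and xc: "x \<in> closure \<Omega>" by (auto simp: S0_def)
    obtain e where e: "e > 0" "cball x e \<subseteq> ball x0 r" using xb by (meson open_ball open_contains_cball)
    have "x \<in> ball x e \<inter> closure \<Omega>" using xc e by simp
    then have xc2: "x \<in> closure (ball x e \<inter> \<Omega>)" using open_Int_closure_subset[of "ball x e" \<Omega>] by blast
    have "closure (ball x e \<inter> \<Omega>) \<subseteq> cball x e"
      by (meson closed_cball closure_minimal inf.coboundedI1 ball_subset_cball)
    then have "continuous_on (closure (ball x e \<inter> \<Omega>)) \<rho>"
      using e(2) by (meson continuous_on_subset rhoc order_trans)
    moreover have "\<rho> y \<le> 0" if "y \<in> ball x e \<inter> \<Omega>" for y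
    proof -
      have "y \<in> cball x e" using that by auto
      then have "y \<in> ball x0 r" using e(2) by blast
      then have "y \<in> \<Omega> \<inter> ball x0 r" using that by auto
      then show ?thesis using eqO by auto
    qed
    ultimately show ?thesis using continuous_le_on_closure xc2 by blast
  qed
  have tau_le: "\<tau> x \<le> \<delta> - dist x x0 ^ 2" if "x \<in> S0" for x
  proof -
    have "dist x x0 ^ 2 = (x - x0) \<bullet> (x - x0)" by (simp add: dist_norm power2_norm_eq_inner)
    then show ?thesis using rho_le[OF that] by (simp add: \<tau>_def)
  qed
  have tau_far: "\<tau> x \<le> 0" if "x \<in> S0" "dist x x0 \<ge> t" for x
  proof -
    have "t^2 \<le> dist x x0 ^ 2" using that(2) t by (simp add: power_mono)
    then show ?thesis using tau_le[OF that(1)] by (simp add: \<delta>_def)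
  qed
  have pos: "W x \<bullet> D\<tau> x > 0" if "x \<in> S0" "\<tau> x > 0" for x
  proof -
    have d: "dist x x0 < t" using tau_far[OF that(1)] that(2) by force
    have "dist (W x \<bullet> D\<rho> x) c < c/2" using s1P that(1) d tr by auto
    then have a: "W x \<bullet> D\<rho> x > c/2" unfolding dist_real_def abs_less_iff by linarith
    have "\<bar>W x \<bullet> (x - x0)\<bar> \<le> norm (W x) * norm (x - x0)" by (rule Cauchy_Schwarz_ineq2)
    also have "\<dots> \<le> M * t" using WM[OF that(1)] d tr M
      by (intro mult_mono) (auto simp: dist_norm)
    also have "\<dots> \<le> M * (c/(8*M))" using tr M by (intro mult_left_mono) auto
    also have "\<dots> = c/8" using M by simp
    finally have b: "\<bar>W x \<bullet> (x - x0)\<bar> \<le> c/8" .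
    have "W x \<bullet> D\<tau> x = W x \<bullet> D\<rho> x - 2 * (W x \<bullet> (x - x0))"
      by (simp add: D\<tau>_def inner_diff_right)
    then show ?thesis using a b c by linarith
  qed

  have tder: "(\<tau> has_derivative (\<lambda>h. D\<tau> x \<bullet> h)) (at x)" if "x \<in> ball x0 r" for x
  proof -
    have "(\<tau> has_derivative (\<lambda>h. D\<rho> x \<bullet> h - (h \<bullet> (x - x0) + (x - x0) \<bullet> h) + 0)) (at x)"
      unfolding \<tau>_def using der that
      by (intro derivative_eq_intros) auto
    moreover have "(\<lambda>h. D\<rho> x \<bullet> h - (h \<bullet> (x - x0) + (x - x0) \<bullet> h) + 0) = (\<lambda>h. D\<tau> x \<bullet> h)"
      by (rule ext) (simp add: D\<tau>_def inner_diff_left inner_diff_right inner_commute)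
    ultimately show ?thesis by simp
  qed
  have tcont: "continuous_on (ball x0 r) \<tau>"
    using tder by (meson has_derivative_continuous continuous_at_imp_continuous_on)
  have kc: "continuous_on UNIV k" unfolding k_def by (intro continuous_intros)
  have k'c: "continuous_on UNIV k'" unfolding k'_def by (intro continuous_intros)
  have Dtc: "continuous_on (ball x0 r) D\<tau>" unfolding D\<tau>_def
    by (intro continuous_intros contD)
  have gder: "((\<lambda>y. k (\<tau> y)) has_derivative (\<lambda>h. Dg x \<bullet> h)) (at x)" if "x \<in> ball x0 r" for x
  proof -
    have "(k has_derivative (*) (k' (\<tau> x))) (at (\<tau> x))"
      unfolding k_def k'_def by (rule has_field_derivative_imp_has_derivative[OF kderiv])
    from has_derivative_compose[OF tder[OF that] this]
    have "((\<lambda>y. k (\<tau> y)) has_derivative (\<lambda>h. k' (\<tau> x) * (D\<tau> x \<bullet> h))) (at x)" .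
    moreover have "(\<lambda>h. k' (\<tau> x) * (D\<tau> x \<bullet> h)) = (\<lambda>h. Dg x \<bullet> h)"
      using that by (simp add: Dg_def)
    ultimately show ?thesis by simp
  qed
  have gz: "g x = 0 \<and> Dg x = 0" if "x \<in> closure \<Omega>" "dist x x0 \<ge> t" for x
  proof (cases "x \<in> ball x0 r")
    case True
    then have "x \<in> S0" using that by (simp add: S0_def)
    then have "\<tau> x \<le> 0" using tau_far that by blast
    then show ?thesis using True kz by (simp add: g_def Dg_def)
  next
    case False then show ?thesis by (simp add: g_def Dg_def)
  qed
  have C1: "C1_closure \<Omega> g Dg"
    unfolding C1_closure_def
  proof (intro conjI ballI)
    define A1 where "A1 = closure \<Omega> \<inter> cball x0 (r/2)"
    define A2 where "A2 = closure \<Omega> - ball x0 (r/2)"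
    have U: "closure \<Omega> = A1 \<union> A2" by (auto simp: A1_def A2_def)
    have cl: "closed A1" "closed A2" by (auto simp: A1_def A2_def intro: closed_Diff closed_Int)
    have A1b: "A1 \<subseteq> ball x0 r" using r by (auto simp: A1_def)
    have A2z: "g x = 0 \<and> Dg x = 0" if "x \<in> A2" for x
      using that gz[of x] tr by (auto simp: A2_def dist_commute)
    show "continuous_on (closure \<Omega>) g"
      unfolding U
    proof (rule continuous_on_closed_Un[OF cl])
      have "continuous_on A1 (\<lambda>x. k (\<tau> x))"
        by (rule continuous_on_compose2[OF kc continuous_on_subset[OF tcont A1b]]) auto
      then show "continuous_on A1 g"
        by (rule continuous_on_eq) (use A1b in \<open>auto simp: g_def\<close>)
      show "continuous_on A2 g"
        by (rule continuous_on_eq[OF continuous_on_const[of _ 0]]) (use A2z in auto)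
    qed
    show "continuous_on (closure \<Omega>) Dg"
      unfolding U
    proof (rule continuous_on_closed_Un[OF cl])
      have "continuous_on A1 (\<lambda>x. k' (\<tau> x) *\<^sub>R D\<tau> x)"
        by (intro continuous_intros continuous_on_compose2[OF k'c continuous_on_subset[OF tcont A1b]]
            continuous_on_subset[OF Dtc A1b]) auto
      then show "continuous_on A1 Dg"
        by (rule continuous_on_eq) (use A1b in \<open>auto simp: Dg_def\<close>)
      show "continuous_on A2 Dg"
        by (rule continuous_on_eq[OF continuous_on_const[of _ 0]]) (use A2z in auto)
    qed
  next
    fix x assume xO: "x \<in> \<Omega>"
    show "(g has_derivative (\<lambda>h. Dg x \<bullet> h)) (at x)"
    proof (cases "x \<in> ball x0 r")
      case True
      show ?thesis
        by (rule has_derivative_transform_within_open[OF gder[OF True] open_ball True])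
          (simp add: g_def)
    next
      case False
      have z: "g y = 0" if "y \<in> \<Omega> - cball x0 t" for y
        using that gz[of y] closure_subset by (auto simp: dist_commute)
      have Dz: "Dg x = 0" using False by (simp add: Dg_def)
      have xin: "x \<in> \<Omega> - cball x0 t" using False xO tr r by (auto simp: dist_commute)
      have "((\<lambda>y. 0) has_derivative (\<lambda>h. Dg x \<bullet> h)) (at x)"
        using Dz by (simp add: has_derivative_const)
      then show ?thesis
        by (rule has_derivative_transform_within_open[OF _ _ xin]) (use opn z in auto)
    qed
  qed
  have I0: "integral \<Omega> (\<lambda>x. W x \<bullet> Dg x) = 0" using H C1 by blast
  define f where "f = (\<lambda>x. W x \<bullet> Dg x)"
  have fc: "continuous_on (closure \<Omega>) f"
    unfolding f_def using C1 Wc by (intro continuous_intros) (auto simp: C1_closure_def)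
  have fint: "f integrable_on \<Omega>" by (rule int_closure[OF opn bdd fc])
  have fnn: "f x \<ge> 0" if "x \<in> \<Omega>" for x
  proof (cases "x \<in> ball x0 r")
    case True
    then have xS: "x \<in> S0" using that closure_subset by (auto simp: S0_def)
    have "f x = k' (\<tau> x) * (W x \<bullet> D\<tau> x)" using True by (simp add: f_def Dg_def)
    moreover have "k' (\<tau> x) * (W x \<bullet> D\<tau> x) \<ge> 0"
    proof (cases "\<tau> x > 0")
      case True then show ?thesis using pos[OF xS] k'nn by (simp add: less_imp_le)
    next
      case False then show ?thesis using kz by simp
    qed
    ultimately show ?thesis by simp
  next
    case False then show ?thesis by (simp add: f_def Dg_def)
  qed
  have "\<tau> x0 > 0"
  proof -
    have "\<not> \<rho> x0 < 0" using eqO x0n r by auto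
    moreover have "t^2 > 0" using t by simp
    moreover have "\<tau> x0 = \<rho> x0 + t^2" by (simp add: \<tau>_def \<delta>_def)
    ultimately show ?thesis by linarith
  qed
  then obtain e where e: "e > 0" and eP: "\<forall>y\<in>ball x0 r. dist y x0 < e \<longrightarrow> dist (\<tau> y) (\<tau> x0) < \<tau> x0"
    using tcont r unfolding continuous_on_iff by (meson centre_in_ball)
  obtain y where yO: "y \<in> \<Omega>" and ye: "dist y x0 < min e r"
    using x0c e r unfolding closure_approachable by (metis min_less_iff_conj)
  have yb: "y \<in> ball x0 r" using ye by (simp add: dist_commute)
  have ty: "\<tau> y > 0" using eP yb ye by (auto simp: dist_real_def)
  have yS: "y \<in> S0" using yb yO closure_subset by (auto simp: S0_def)
  have fy: "f y > 0"
    using pos[OF yS ty] k'pos[OF ty] yb by (simp add: f_def Dg_def)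
  obtain e2 where e2: "e2 > 0" and e2b: "ball y e2 \<subseteq> \<Omega>"
    and e2P: "\<forall>z\<in>ball y e2. f z > f y / 2"
  proof -
    obtain a where a: "a > 0" "ball y a \<subseteq> \<Omega>" using opn yO open_contains_ball by blast
    have "continuous (at y) f"
      using fc opn yO by (metis closure_subset continuous_on_eq_continuous_at continuous_on_subset)
    then obtain b where b: "b > 0" "\<forall>z. dist z y < b \<longrightarrow> dist (f z) (f y) < f y / 2"
      using fy unfolding continuous_at_eps_delta by (meson half_gt_zero)
    show ?thesis
    proof (rule that[of "min a b"])
      show "min a b > 0" using a b by simp
      show "ball y (min a b) \<subseteq> \<Omega>" using a by auto
      show "\<forall>z\<in>ball y (min a b). f y / 2 < f z"
      proof
        fix z assume "z \<in> ball y (min a b)"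
        then have "dist z y < b" by (simp add: dist_commute)
        then have "\<bar>f z - f y\<bar> < f y / 2" using b(2) by (simp add: dist_real_def)
        then show "f y / 2 < f z" unfolding abs_less_iff by linarith
      qed
    qed
  qed
  define d where "d = e2 / (2 * real DIM('a))"
  have d: "d > 0" using e2 by (simp add: d_def)
  define Q where "Q = cbox (y - d *\<^sub>R One) (y + d *\<^sub>R One)"
  have Qb: "Q \<subseteq> ball y e2"
  proof
    fix z assume "z \<in> Q"
    then have zb: "\<bar>(z - y) \<bullet> b\<bar> \<le> d" if "b \<in> Basis" for b
      using that by (auto simp: Q_def mem_box inner_diff_left algebra_simps)
    have "norm (z - y) \<le> (\<Sum>b\<in>Basis. \<bar>(z - y) \<bullet> b\<bar>)" by (rule norm_le_l1)
    also have "\<dots> \<le> (\<Sum>b\<in>(Basis::'a set). d)" by (rule sum_mono) (use zb in auto)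
    also have "\<dots> = real DIM('a) * d" by simp
    also have "\<dots> = e2 / 2" by (simp add: d_def)
    finally show "z \<in> ball y e2" using e2 by (simp add: dist_norm norm_minus_commute)
  qed
  have QO: "Q \<subseteq> \<Omega>" using Qb e2b by blast
  have Qpos: "Henstock_Kurzweil_Integration.content Q > 0" unfolding Q_def
    by (rule content_pos_lt) (use d in \<open>auto simp: inner_add_left inner_diff_left\<close>)
  have fQ: "f integrable_on Q"
    unfolding Q_def by (rule integrable_continuous) (use fc QO closure_subset in \<open>auto simp: Q_def intro: continuous_on_subset\<close>)
  have "Henstock_Kurzweil_Integration.content Q * (f y / 2) = integral Q (\<lambda>_. f y / 2)" by (simp add: Q_def)
  also have "\<dots> \<le> integral Q f"
    by (rule integral_le) (use fQ e2P Qb in \<open>auto simp: Q_def less_imp_le\<close>)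
  also have "\<dots> \<le> integral \<Omega> f"
    by (rule integral_subset_le[OF QO fQ fint]) (use fnn in auto)
  also have "\<dots> = 0" using I0 by (simp add: f_def)
  finally have "Henstock_Kurzweil_Integration.content Q * (f y / 2) \<le> 0" .
  moreover have "Henstock_Kurzweil_Integration.content Q * (f y / 2) > 0" using Qpos fy by simp
  ultimately show False by simp
qed

theorem lemma4p3:
  fixes \<Omega> :: "'a::euclidean_space set"
    and p \<beta> :: real
    and v \<gamma>1 \<gamma>2 u1 u2 :: "'a \<Rightarrow> real"
    and G1 G2 \<nu> :: "'a \<Rightarrow> 'a"
    and x0 :: 'a
  assumes "1 < p" and "DIM('a) \<ge> 2"
    and "open \<Omega>" and "bounded \<Omega>"
    and "0 < \<beta>" and "\<beta> < 1" and "C2beta_boundary \<Omega> \<beta>"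
    and "\<forall>x\<in>frontier \<Omega>. outer_unit_normal \<Omega> x (\<nu> x)"
    and "\<exists>V DV H. C2_holder (closure \<Omega>) \<beta> V DV H \<and> (\<forall>x\<in>frontier \<Omega>. V x = v x)"
    and "admissible_conductivity \<Omega> \<gamma>1" and "admissible_conductivity \<Omega> \<gamma>2"
    and "weak_solution \<Omega> p \<gamma>1 v u1 G1" and "weak_solution \<Omega> p \<gamma>2 v u2 G2"
    and "\<forall>g Dg. C1_closure \<Omega> g Dg \<longrightarrow> weak_DN \<Omega> p \<gamma>1 G1 Dg = weak_DN \<Omega> p \<gamma>2 G2 Dg"
    and "x0 \<in> frontier \<Omega>"
  shows "strong_DN p \<gamma>1 G1 (\<nu> x0) x0 = strong_DN p \<gamma>2 G2 (\<nu> x0) x0"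
proof -
  note p = assms(1) and opn = assms(3) and bdd = assms(4)
  have g1c: "continuous_on (closure \<Omega>) \<gamma>1" using assms(10) unfolding admissible_conductivity_def C1_closure_def by blast
  have g2c: "continuous_on (closure \<Omega>) \<gamma>2" using assms(11) unfolding admissible_conductivity_def C1_closure_def by blast
  have G1c: "continuous_on (closure \<Omega>) G1" using assms(12) unfolding weak_solution_def C1_closure_def by blast
  have G2c: "continuous_on (closure \<Omega>) G2" using assms(13) unfolding weak_solution_def C1_closure_def by blast
  define V1 where "V1 = (\<lambda>x. \<gamma>1 x *\<^sub>R (norm (G1 x) powr (p - 2) *\<^sub>R G1 x))"
  define V2 where "V2 = (\<lambda>x. \<gamma>2 x *\<^sub>R (norm (G2 x) powr (p - 2) *\<^sub>R G2 x))"
  have V1c: "continuous_on (closure \<Omega>) V1" unfolding V1_def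
    by (intro continuous_intros g1c Ncont_on[OF p G1c])
  have V2c: "continuous_on (closure \<Omega>) V2" unfolding V2_def
    by (intro continuous_intros g2c Ncont_on[OF p G2c])
  have fl1: "flux p (\<gamma>1 x) (G1 x) w = V1 x \<bullet> w" for x w by (simp add: flux_def V1_def)
  have fl2: "flux p (\<gamma>2 x) (G2 x) w = V2 x \<bullet> w" for x w by (simp add: flux_def V2_def)
  define W where "W = (\<lambda>x. V1 x - V2 x)"
  have Wc: "continuous_on (closure \<Omega>) W" unfolding W_def by (intro continuous_intros V1c V2c)
  have HW: "integral \<Omega> (\<lambda>x. W x \<bullet> Dg x) = 0" if "C1_closure \<Omega> g Dg" for g Dg
  proof -
    have Dgc: "continuous_on (closure \<Omega>) Dg" using that by (simp add: C1_closure_def)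
    have i1: "(\<lambda>x. V1 x \<bullet> Dg x) integrable_on \<Omega>"
      by (rule int_closure[OF opn bdd]) (intro continuous_intros V1c Dgc)
    have i2: "(\<lambda>x. V2 x \<bullet> Dg x) integrable_on \<Omega>"
      by (rule int_closure[OF opn bdd]) (intro continuous_intros V2c Dgc)
    have "integral \<Omega> (\<lambda>x. W x \<bullet> Dg x) = integral \<Omega> (\<lambda>x. V1 x \<bullet> Dg x - V2 x \<bullet> Dg x)"
      by (simp add: W_def inner_diff_left)
    also have "\<dots> = integral \<Omega> (\<lambda>x. V1 x \<bullet> Dg x) - integral \<Omega> (\<lambda>x. V2 x \<bullet> Dg x)"
      by (rule integral_diff[OF i1 i2])
    also have "\<dots> = weak_DN \<Omega> p \<gamma>1 G1 Dg - weak_DN \<Omega> p \<gamma>2 G2 Dg"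
      by (simp add: weak_DN_def fl1 fl2)
    also have "\<dots> = 0" using assms(14) that by simp
    finally show ?thesis .
  qed
  have HmW: "integral \<Omega> (\<lambda>x. (- W x) \<bullet> Dg x) = 0" if "C1_closure \<Omega> g Dg" for g Dg
    using HW[OF that] by (simp add: integral_neg)
  have N: "outer_unit_normal \<Omega> x0 (\<nu> x0)" using assms(8) assms(15) by blast
  have a: "W x0 \<bullet> \<nu> x0 \<le> 0"
    by (rule core[OF opn bdd Wc _ N]) (use HW in blast)
  have b: "(\<lambda>x. - W x) x0 \<bullet> \<nu> x0 \<le> 0"
    by (rule core[OF opn bdd _ _ N]) (use HmW Wc in \<open>auto intro: continuous_intros\<close>)
  have "W x0 \<bullet> \<nu> x0 = 0" using a b by simp
  then show ?thesis by (simp add: strong_DN_def fl1 fl2 W_def inner_diff_left)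
qed

end
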